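(* Let $B:\mathbb{Z}\times\mathbb{Z}\to\mathbb{R}$ be defined by the recurrence $$B(r,s)=\begin{cases}1 & s\le 0,\\ 0 & s>0 \text{ and } r<s,\\ \min\Big(\tfrac12\big[B(r-1,s)+B(r-1,s-1)\big],\ B(r-2,s-1)\Big) & \text{otherwise.}\end{cases}$$ Then for all integers $c\ge 3$ and $s\ge 2$, $B(cs-1,s)\ge 1-\frac{1}{2^{c-1}}$. *)

theory Defs
  imports Complex_Main
begin

function B :: "int \<Rightarrow> int \<Rightarrow> real" where
  "B r s = (if s \<le> 0 then 1
            else if r < s then 0
            else min ((B (r - 1) s + B (r - 1) (s - 1)) / 2) (B (r - 2) (s - 1)))"
  by auto
termination
  by (relation "measure (\<lambda>(r, s). nat r)") auto

end

theory Submission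
  imports Defs
begin

function W :: "int \<Rightarrow> int \<Rightarrow> real" where
  "W r s = (if s \<le> 0 then 1
            else if r \<le> 2*s - 2 then 0
            else (W (r - 1) s + W (r - 1) (s - 1)) / 2)"
  by auto
termination
  by (relation "measure (\<lambda>(r, s). nat r)") auto

declare W.simps[simp del] B.simps[simp del]

lemma W_bounds: "0 \<le> W r s \<and> W r s \<le> 1"
proof (induction r s rule: W.induct)
  case (1 r s)
  then show ?case using W.simps[of r s] by (auto simp: divide_simps)
qed

lemma B_nonneg: "0 \<le> B r s"
proof (induction r s rule: B.induct)
  case (1 r s)
  then show ?case by (subst B.simps) (auto simp: divide_simps)
qed

lemma W_mono: "W r s \<le> W (r - 2) (s - 1)"
proof (induction r s rule: W.induct)
  case (1 r s)
  show ?case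
  proof (cases "s - 1 \<le> 0")
    case True
    then show ?thesis using W_bounds[of r s] by (subst (2) W.simps) simp
  next
    case False
    show ?thesis
    proof (cases "r \<le> 2*s - 2")
      case True
      then show ?thesis using False W_bounds[of "r-2" "s-1"] by (subst W.simps) simp
    next
      case F2: False
      have e1: "W r s = (W (r - 1) s + W (r - 1) (s - 1)) / 2"
        using False F2 by (subst W.simps) simp
      have e2: "W (r-2) (s-1) = (W (r - 3) (s-1) + W (r - 3) (s - 2)) / 2"
        using False F2 by (subst W.simps) (simp add: algebra_simps)
      have i1: "W (r - 1) s \<le> W (r - 3) (s-1)" using 1(1) False F2 by (simp add: algebra_simps)
      have i2: "W (r - 1) (s-1) \<le> W (r - 3) (s-2)" using 1(2) False F2 by (simp add: algebra_simps)
      show ?thesis using e1 e2 i1 i2 by simp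
    qed
  qed
qed

lemma B_ge_W: "W r s \<le> B r s"
proof (induction r s rule: B.induct)
  case (1 r s)
  show ?case
  proof (cases "s \<le> 0")
    case True
    then show ?thesis by (simp add: W.simps B.simps)
  next
    case False
    show ?thesis
    proof (cases "r < s")
      case True
      then have "W r s = 0" using False by (subst W.simps) simp
      then show ?thesis using B_nonneg by simp
    next
      case F2: False
      have eB: "B r s = min ((B (r - 1) s + B (r - 1) (s - 1)) / 2) (B (r - 2) (s - 1))"
        using False F2 by (subst B.simps) simp
      have avg: "W r s \<le> (W (r - 1) s + W (r - 1) (s - 1)) / 2"
      proof (cases "r \<le> 2*s - 2")
        case True
        then show ?thesis using False W_bounds[of "r-1" s] W_bounds[of "r-1" "s-1"]
          by (subst W.simps) simp
      next
        case False
        then show ?thesis using \<open>\<not> s \<le> 0\<close> by (subst W.simps) simp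
      qed
      have i1: "W (r-1) s \<le> B (r-1) s" using 1(1) False F2 by simp
      have i2: "W (r-1) (s-1) \<le> B (r-1) (s-1)" using 1(2) False F2 by simp
      have i3: "W (r-2) (s-1) \<le> B (r-2) (s-1)" using 1(3) False F2 by simp
      show ?thesis using eB avg i1 i2 i3 W_mono[of r s] by simp
    qed
  qed
qed

fun Q :: "nat \<Rightarrow> int \<Rightarrow> real" where
  "Q 0 k = (if k \<ge> 0 then 1 else 0)"
| "Q (Suc n) k = (Q n k + Q n (k - 1)) / 2"

lemma Q_neg: "k < 0 \<Longrightarrow> Q n k = 0"
  by (induction n arbitrary: k) auto

lemma Q_sym: "Q n k + Q n (int n - k - 1) = 1"
proof (induction n arbitrary: k)
  case 0
  then show ?case by auto
next
  case (Suc n)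
  have a: "Q n k + Q n (int n - k - 1) = 1" using Suc by blast
  have b: "Q n (k-1) + Q n (int n - (k-1) - 1) = 1" using Suc by blast
  have "int (Suc n) - k - 1 = int n - k" by simp
  then show ?case using a b by (simp add: algebra_simps) (simp add: field_simps)
qed

lemma Q_ratio: "of_int (int n - k + 1) * Q n (k - 1) \<le> of_int k * Q n k"
proof (induction n arbitrary: k)
  case 0
  then show ?case by auto
next
  case (Suc n)
  have a: "of_int (int n - k + 1) * Q n (k - 1) \<le> of_int k * Q n k" using Suc by blast
  have b: "of_int (int n - (k-1) + 1) * Q n (k - 1 - 1) \<le> of_int (k-1) * Q n (k-1)" using Suc by blast
  show ?case using a b by (simp add: algebra_simps)
qed

lemma Q_step: "2 * of_int (int n - k + 1) * Q (Suc n) k \<le> real (Suc n) * Q n k"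
  using Q_ratio[of n k] by (simp add: algebra_simps)

lemma Q_nonneg: "0 \<le> Q n k"
  by (induction n arbitrary: k) auto

lemma W_eq: "r \<ge> 2*s - 2 \<Longrightarrow> r \<ge> 0 \<Longrightarrow> W r s = 1 - Q (nat r) (s-1) - Q (nat r) (s-2)"
proof (induction r s rule: W.induct)
  case (1 r s)
  show ?case
  proof (cases "s \<le> 0")
    case True
    then show ?thesis by (simp add: W.simps Q_neg)
  next
    case False
    show ?thesis
    proof (cases "r \<le> 2*s - 2")
      case True
      then have r: "r = 2*s-2" using 1 by simp
      have w: "W r s = 0" using True False by (subst W.simps) simp
      have "Q (nat r) (s-1) + Q (nat r) (int (nat r) - (s-1) - 1) = 1" by (rule Q_sym)
      moreover have "int (nat r) - (s-1) - 1 = s - 2" using r 1 by simp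
      ultimately show ?thesis using w by simp
    next
      case F2: False
      have e: "W r s = (W (r - 1) s + W (r - 1) (s - 1)) / 2"
        using False F2 by (subst W.simps) simp
      have i1: "W (r-1) s = 1 - Q (nat (r-1)) (s-1) - Q (nat (r-1)) (s-2)"
        using 1 False F2 by simp
      have i2: "W (r-1) (s-1) = 1 - Q (nat (r-1)) (s-1-1) - Q (nat (r-1)) (s-1-2)"
        using 1 False F2 by simp
      have n: "nat r = Suc (nat (r-1))" using F2 False by simp
      show ?thesis using e i1 i2 unfolding n by (simp add: algebra_simps) (simp add: field_simps)
    qed
  qed
qed

lemma base_path:
  "Q (2*t+1+j) (int t) * (fact (2*t+1) * fact (t+1+j) * 2^j * 2) \<le> (fact (2*t+1+j) * fact (t+1) :: real)"
proof (induction j)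
  case 0
  have "Q (2*t+1) (int t) + Q (2*t+1) (int (2*t+1) - int t - 1) = 1" by (rule Q_sym)
  then have "Q (2*t+1) (int t) = 1/2" by simp
  then show ?case by simp
next
  case (Suc j)
  define n where "n = 2*t+1+j"
  define X :: real where "X = fact (2*t+1) * fact (t+1+j) * 2^j * 2"
  have X0: "X \<ge> 0" unfolding X_def by simp
  have st: "2 * of_int (int n - int t + 1) * Q (Suc n) (int t) \<le> real (Suc n) * Q n (int t)"
    by (rule Q_step)
  have c1: "of_int (int n - int t + 1) = real (t + 2 + j)" unfolding n_def by simp
  have "Q (Suc n) (int t) * (fact (2*t+1) * fact (t+1+Suc j) * 2^Suc j * 2)
      = (2 * real (t+2+j) * Q (Suc n) (int t)) * X"
  proof -
    have f: "(fact (t+1+Suc j)::real) = real (t+2+j) * fact (t+1+j)"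
      by (simp add: algebra_simps)
    show ?thesis unfolding X_def f by (simp del: Q.simps add: algebra_simps)
  qed
  also have "\<dots> \<le> (real (Suc n) * Q n (int t)) * X"
    using st c1 X0 by (intro mult_right_mono) auto
  also have "\<dots> = real (Suc n) * (Q n (int t) * X)" by simp
  also have "\<dots> \<le> real (Suc n) * (fact n * fact (t+1))"
    using Suc unfolding n_def X_def by (intro mult_left_mono) auto
  also have "\<dots> = fact (Suc n) * fact (t+1)" by (simp add: algebra_simps)
  finally show ?case unfolding n_def by simp
qed

lemma base_path':
  "n = 2*t+1+j \<Longrightarrow> m = t+1+j \<Longrightarrow> a = 2*t+1 \<Longrightarrow> b = t+1 \<Longrightarrow>
   Q n (int t) * (fact a * fact m * 2^j * 2) \<le> (fact n * fact b :: real)"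
  using base_path[of t j] by simp

lemma poly_ineq: "(3*u+7)*(3*u+8)*(3*u+9)*(u+3) \<le> 2*(2*u+4)*(2*u+5)*(2*u+6)*(2*(u::nat)+7)"
  by (simp add: algebra_simps)

lemma fact_ineq: "2 * fact (3*u+6) * fact (u+2) \<le> fact (2*u+3) * fact (2*u+5) * (2::nat)^(u+2)"
proof (induction u)
  case 0
  then show ?case by (simp add: fact_numeral)
next
  case (Suc u)
  have a: "fact (3*Suc u+6) = (3*u+7)*(3*u+8)*(3*u+9)*fact(3*u+6)"
  proof -
    have e: "3*Suc u+6 = Suc(Suc(Suc(3*u+6)))" by simp
    show ?thesis unfolding e fact_Suc by (simp add: algebra_simps)
  qed
  have b: "fact (Suc u+2) = (u+3)*fact(u+2)"
  proof -
    have e: "Suc u+2 = Suc(u+2)" by simp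
    show ?thesis unfolding e fact_Suc by (simp add: algebra_simps)
  qed
  have c: "fact (2*Suc u+3) = (2*u+4)*(2*u+5)*fact(2*u+3)"
  proof -
    have e: "2*Suc u+3 = Suc(Suc(2*u+3))" by simp
    show ?thesis unfolding e fact_Suc by (simp add: algebra_simps)
  qed
  have d: "fact (2*Suc u+5) = (2*u+6)*(2*u+7)*fact(2*u+5)"
  proof -
    have e: "2*Suc u+5 = Suc(Suc(2*u+5))" by simp
    show ?thesis unfolding e fact_Suc by (simp add: algebra_simps)
  qed
  have "2 * fact (3*Suc u+6) * fact (Suc u+2) = (2 * fact (3*u+6) * fact (u+2)) * ((3*u+7)*(3*u+8)*(3*u+9)*(u+3))"
    unfolding a b by (simp add: algebra_simps)
  also have "\<dots> \<le> (fact (2*u+3) * fact (2*u+5) * (2::nat)^(u+2)) * (2*(2*u+4)*(2*u+5)*(2*u+6)*(2*u+7))"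
    by (rule mult_mono[OF Suc.IH poly_ineq[of u]]) auto
  also have "\<dots> = fact (2*Suc u+3) * fact (2*Suc u+5) * 2^(Suc u+2)"
    unfolding c d by (simp add: algebra_simps)
  finally show ?case .
qed

lemma G3: assumes "s \<ge> 2" shows "Q (3*s) (int s - 1) \<le> 1/8"
proof -
  obtain u where s: "s = u + 2" using assms by (metis le_add_diff_inverse2)
  define t where "t = u + 1"
  have bp: "Q (3*u+6) (int t) * (fact (2*u+3) * fact (2*u+5) * 2^(u+3) * 2) \<le> (fact (3*u+6) * fact (u+2) :: real)"
    by (rule base_path'[where t=t and j="u+3"]) (auto simp: t_def)
  have fi: "real (2 * fact (3*u+6) * fact (u+2)) \<le> real (fact (2*u+3) * fact (2*u+5) * (2::nat)^(u+2))"
    using fact_ineq[of u] by linarith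
  have fi': "2 * fact (3*u+6) * fact (u+2) \<le> (fact (2*u+3) * fact (2*u+5) * 2^(u+2) :: real)"
    using fi by (simp only: of_nat_mult of_nat_fact of_nat_power) simp
  define Y :: real where "Y = fact (2*u+3) * fact (2*u+5) * 2^(u+1)"
  have Y0: "Y > 0" unfolding Y_def by simp
  have e1: "2*t+1+(t+2) = 3*u+6" "t+1+(t+2) = 2*u+5" "2*t+1 = 2*u+3" "t+1 = u+2" "t+2 = u+3"
    unfolding t_def by auto
  have "Q (3*u+6) (int t) * (8 * Y) = Q (3*u+6) (int t) * (fact (2*u+3) * fact (2*u+5) * 2^(u+3) * 2)"
    unfolding Y_def by (simp add: power_add)
  also have "\<dots> \<le> fact (3*u+6) * fact (u+2)"
    using bp .
  also have "\<dots> \<le> Y" using fi' unfolding Y_def by (simp add: algebra_simps)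
  finally have h: "Q (3*u+6) (int t) * (8 * Y) \<le> Y" .
  have "Q (3*u+6) (int t) * 8 \<le> 1"
  proof (rule ccontr)
    assume "\<not> ?thesis"
    then have "1 * Y < (Q (3*u+6) (int t) * 8) * Y" using Y0 by (intro mult_strict_right_mono) auto
    then show False using h by (simp add: mult.assoc)
  qed
  then have "Q (3*u+6) (int t) \<le> 1/8" by simp
  moreover have "3*s = 3*u+6" "int s - 1 = int t" unfolding s t_def by auto
  ultimately show ?thesis by simp
qed

lemma cpath:
  assumes s2: "s \<ge> 2" and n0: "n0 \<ge> 3*s"
  shows "Q (n0 + j) (int s - 1) \<le> Q n0 (int s - 1) * ((3*real s+1)/(4*(real s+1)))^j"
proof (induction j)
  case 0
  then show ?case by simp
next
  case (Suc j)
  define n where "n = n0 + j"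
  define f where "f = (3*real s+1)/(4*(real s+1))"
  have st: "2 * of_int (int n - (int s - 1) + 1) * Q (Suc n) (int s - 1) \<le> real (Suc n) * Q n (int s - 1)"
    by (rule Q_step)
  have nn: "real n \<ge> 3 * real s" using n0 unfolding n_def by simp
  have sp: "real s \<ge> 2" using s2 by simp
  have c1: "of_int (int n - (int s - 1) + 1) = real n - real s + 2" using nn by simp
  have pos: "real n - real s + 2 > 0" using nn sp by simp
  have key: "real (Suc n) \<le> f * (2 * (real n - real s + 2))"
  proof -
    have "0 \<le> (real n - 3*real s) * (real s - 1)" using nn sp by simp
    then have "4*(real s+1)*(real n + 1) \<le> (3*real s+1)*(2*(real n - real s + 2))"
      by (simp add: algebra_simps)
    then show ?thesis unfolding f_def using sp by (simp add: field_simps)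
  qed
  have "2 * (real n - real s + 2) * Q (Suc n) (int s - 1) \<le> f * (2 * (real n - real s + 2)) * Q n (int s - 1)"
    using st c1 key Q_nonneg[of n "int s - 1"]
    by (smt (verit, best) mult_right_mono)
  then have q: "Q (Suc n) (int s - 1) \<le> f * Q n (int s - 1)" using pos
    by (smt (verit, best) mult.commute mult.left_commute mult_le_cancel_left_pos)
  have f0: "f \<ge> 0" unfolding f_def by simp
  have "Q (n0 + Suc j) (int s - 1) = Q (Suc n) (int s - 1)" unfolding n_def by simp
  also have "\<dots> \<le> f * Q n (int s - 1)" by (rule q)
  also have "\<dots> \<le> f * (Q n0 (int s - 1) * f^j)" using Suc f0 unfolding n_def f_def
    by (intro mult_left_mono) auto
  also have "\<dots> = Q n0 (int s - 1) * f^Suc j" by (simp add: algebra_simps)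
  finally show ?case unfolding f_def .
qed

lemma fpow: assumes "s \<ge> (2::nat)" shows "((3*real s+1)/(4*(real s+1)))^s \<le> 1/2"
proof (cases "s = 2")
  case True
  then show ?thesis by (simp add: power2_eq_square)
next
  case False
  then have s3: "s \<ge> 3" using assms by simp
  have f0: "0 \<le> (3*real s+1)/(4*(real s+1))" by simp
  have f1: "(3*real s+1)/(4*(real s+1)) \<le> 3/4" by (simp add: field_simps)
  have "((3*real s+1)/(4*(real s+1)))^s \<le> (3/4)^s" using f0 f1 by (intro power_mono) auto
  also have "\<dots> \<le> (3/4)^3" using s3 by (intro power_decreasing) auto
  also have "\<dots> \<le> 1/2" by (simp add: power3_eq_cube)
  finally show ?thesis .
qed

lemma Gall: assumes "s \<ge> 2" shows "Q ((d+3)*s) (int s - 1) \<le> 1/2^(d+3)"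
proof (induction d)
  case 0
  then show ?case using G3[OF assms] by simp
next
  case (Suc d)
  have "Q ((Suc d+3)*s) (int s - 1) = Q ((d+3)*s + s) (int s - 1)" by (simp add: algebra_simps)
  also have "\<dots> \<le> Q ((d+3)*s) (int s - 1) * ((3*real s+1)/(4*(real s+1)))^s"
    using assms by (intro cpath) auto
  also have "\<dots> \<le> (1/2^(d+3)) * (1/2)"
    using Suc fpow[OF assms] Q_nonneg by (intro mult_mono) auto
  also have "\<dots> = 1/2^(Suc d+3)" by (simp add: power_add)
  finally show ?case .
qed

theorem mainTheorem20:
  fixes c s :: int
  assumes "c \<ge> 3" and "s \<ge> 2"
  shows "B (c * s - 1) s \<ge> 1 - 1 / 2 ^ nat (c - 1)"
proof -
  define d where "d = nat (c - 3)"
  have d: "c = int d + 3" unfolding d_def using assms by simp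
  define t where "t = nat s"
  have t: "s = int t" unfolding t_def using assms by simp
  have t2: "t \<ge> 2" unfolding t_def using assms by simp
  define N where "N = nat (c*s - 1)"
  have "3 * 2 \<le> c * s" using assms by (intro mult_mono) auto
  then have cs: "c * s \<ge> 6" by simp
  have cs3: "3 * s \<le> c * s" using assms by (intro mult_right_mono) auto
  have WB: "W (c*s-1) s \<le> B (c*s-1) s" by (rule B_ge_W)
  have We: "W (c*s-1) s = 1 - Q N (s-1) - Q N (s-2)"
    unfolding N_def by (rule W_eq) (use assms cs cs3 in linarith)+
  have i1: "int (Suc N) = c*s" unfolding N_def using cs by simp
  have i2: "c*s = int ((d+3)*t)" using d t by simp
  have SN: "Suc N = (d+3)*t" using i1 i2 by linarith
  have "Q (Suc N) (int t - 1) = (Q N (s-1) + Q N (s-2)) / 2" using t by simp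
  then have qq: "Q N (s-1) + Q N (s-2) = 2 * Q ((d+3)*t) (int t - 1)" unfolding SN by simp
  have G: "Q ((d+3)*t) (int t - 1) \<le> 1/2^(d+3)" by (rule Gall[OF t2])
  have "nat (c - 1) = d + 2" using d by simp
  then have p: "1 / 2 ^ nat (c - 1) = 2 * (1/(2::real)^(d+3))" by (simp add: power_add)
  show ?thesis using WB We qq G p by linarith
qed

end
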